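(* Let $G$ be a graph on $n$ vertices, $h\geq 3$ a constant, $\Lambda>0$, fix a vertex $v$ and an $h$-coloring $\varphi$ of the vertices of $G$. Suppose $t_{G_\varphi}(v)\geq \Lambda\cdot (2h\log n)^{(h-1)^2}$. Then there exists a vector $P=(p_1,\dots,p_h)\in\mathsf{Product}_h(\Lambda)$ such that, when each vertex of color class $i$ is kept independently with probability $p_i$, the probability that $v$ lies on an $h$-cycle of the induced subgraph of $G_\varphi$ on the kept vertices is at least $(1-1/e)^{h-1}$.
   Context: For the coloring $\varphi:V(G)\to[h]$, let $V_i=\varphi^{-1}(i)$. $G_\varphi$ is the directed graph on $V(G)$ obtained by keeping, for every $i\in[h]$, only the edges of $G$ between $V_i$ and $V_{i+1 \bmod h}$, directed from $V_i$ to $V_{i+1\bmod h}$. $t_{G_\varphi}(v)$ is the number of $h$-cycles of $G_\varphi$ containing $v$. Logarithms are base 2. $\mathsf{Product}_h(\Lambda)$ is the set of vectors $(p_1,\dots,p_h)\in[0,1]^h$ such that each $p_i\in\{2^{-j}: j \text{ an integer}, 0\leq j\leq \log(\Lambda)+1\}$ and $\prod_{i=1}^h p_i\leq 1/\Lambda$. *)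

theory Defs
  imports "HOL-Probability.Probability"
begin

definition simple_graph :: "'a set \<Rightarrow> ('a \<Rightarrow> 'a \<Rightarrow> bool) \<Rightarrow> bool" where
  "simple_graph V E \<longleftrightarrow> finite V \<and> (\<forall>x y. E x y \<longrightarrow> x \<in> V \<and> y \<in> V)
     \<and> (\<forall>x y. E x y \<longrightarrow> E y x) \<and> (\<forall>x. \<not> E x x)"

text \<open>Arcs of G_phi, colours are 0..h-1: keep edges from class i to class (i+1 mod h).\<close>
definition col_arc :: "('a \<Rightarrow> 'a \<Rightarrow> bool) \<Rightarrow> ('a \<Rightarrow> nat) \<Rightarrow> nat \<Rightarrow> 'a \<Rightarrow> 'a \<Rightarrow> bool" where
  "col_arc E \<phi> h a b \<longleftrightarrow> E a b \<and> \<phi> b = (\<phi> a + 1) mod h"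

text \<open>Directed h-cycles of the digraph (W, A), each represented by its set of arcs.\<close>
definition dir_cycles :: "'a set \<Rightarrow> ('a \<Rightarrow> 'a \<Rightarrow> bool) \<Rightarrow> nat \<Rightarrow> ('a \<times> 'a) set set" where
  "dir_cycles W A h = { {(c i, c ((i + 1) mod h)) | i. i < h} | c.
      (\<forall>i<h. c i \<in> W) \<and> inj_on c {..<h} \<and> (\<forall>i<h. A (c i) (c ((i + 1) mod h))) }"

definition t_cycles :: "'a set \<Rightarrow> ('a \<Rightarrow> 'a \<Rightarrow> bool) \<Rightarrow> ('a \<Rightarrow> nat) \<Rightarrow> nat \<Rightarrow> 'a \<Rightarrow> nat" where
  "t_cycles W E \<phi> h v = card {C \<in> dir_cycles W (col_arc E \<phi> h) h. v \<in> fst ` C}"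

definition Product :: "nat \<Rightarrow> real \<Rightarrow> (nat \<Rightarrow> real) set" where
  "Product h \<Lambda> = {p. (\<forall>i<h. \<exists>j::int. 0 \<le> j \<and> real_of_int j \<le> log 2 \<Lambda> + 1 \<and> p i = 2 powr (- real_of_int j))
      \<and> (\<Prod>i<h. p i) \<le> 1 / \<Lambda>}"

definition keep_pmf :: "'a set \<Rightarrow> ('a \<Rightarrow> nat) \<Rightarrow> (nat \<Rightarrow> real) \<Rightarrow> ('a \<Rightarrow> bool) pmf" where
  "keep_pmf V \<phi> p = Pi_pmf V False (\<lambda>u. bernoulli_pmf (p (\<phi> u)))"

end

theory Submission
  imports Defs
begin


lemma any_kept:
  assumes fin: "finite T" and sub: "T' \<subseteq> T"
    and P: "\<forall>y\<in>T. P y = bernoulli_pmf pp" and pp: "0 \<le> pp" "pp \<le> 1"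
  shows "measure_pmf.prob (Pi_pmf T False P) {f. \<exists>y\<in>T'. f y} = 1 - (1 - pp) ^ card T'"
proof -
  have fin': "finite T'" using fin sub finite_subset by blast
  have c: "{f. \<exists>y\<in>T'. f y} = UNIV - Pi T (\<lambda>y. if y \<in> T' then {False} else UNIV)"
    using sub by (auto simp: Pi_def)
  have "measure_pmf.prob (Pi_pmf T False P) (Pi T (\<lambda>y. if y \<in> T' then {False} else UNIV))
      = (\<Prod>y\<in>T. measure_pmf.prob (P y) (if y \<in> T' then {False} else UNIV))"
    by (rule measure_Pi_pmf_Pi[OF fin])
  also have "\<dots> = (\<Prod>y\<in>T. if y \<in> T' then 1 - pp else 1)"
    by (intro prod.cong refl) (use P pp in \<open>auto simp: measure_pmf_single\<close>)
  also have "\<dots> = (1 - pp) ^ card T'"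
    using fin sub by (simp add: prod.If_cases Int_absorb1)
  finally show ?thesis unfolding c
    by (subst measure_pmf.prob_compl[unfolded space_measure_pmf]) auto
qed



lemma conc_aux:
  fixes a :: real assumes "0 \<le> a" "a \<le> 1"
  shows "real m * a ^ m * (1 - a) \<le> 1 - a ^ m"
proof (induction m)
  case 0 then show ?case by simp
next
  case (Suc m)
  have am: "a ^ Suc m \<le> a ^ m" using assms by (simp add: mult_left_le_one_le)
  have "real (Suc m) * a ^ Suc m * (1 - a) = real m * a ^ Suc m * (1 - a) + a * a ^ m * (1 - a)"
    by (simp add: algebra_simps)
  also have "\<dots> \<le> real m * a ^ m * (1 - a) + a ^ m * (1 - a)"
    using am assms by (intro add_mono mult_right_mono mult_left_mono) (auto simp: mult_left_le_one_le)
  also have "\<dots> \<le> (1 - a ^ m) + a ^ m * (1 - a)" using Suc by simp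
  also have "\<dots> = 1 - a ^ Suc m" by (simp add: algebra_simps)
  finally show ?case .
qed

lemma conc:
  fixes a :: real assumes a: "0 \<le> a" "a \<le> 1" and sm: "s \<le> m"
  shows "real s * (1 - a ^ m) \<le> real m * (1 - a ^ s)"
  using sm
proof (induction m rule: dec_induct)
  case base then show ?case by simp
next
  case (step m)
  show ?case
  proof (cases "s = 0")
    case True then show ?thesis by simp
  next
    case False
    then have m0: "real m > 0" using step by simp
    have h: "real m * (1 - a ^ Suc m) \<le> real (Suc m) * (1 - a ^ m)"
      using conc_aux[OF a, of m] by (simp add: algebra_simps)
    have "real m * (real s * (1 - a ^ Suc m)) \<le> real s * (real (Suc m) * (1 - a ^ m))"
      using mult_left_mono[OF h, of "real s"] by (simp add: algebra_simps)
    also have "\<dots> = real (Suc m) * (real s * (1 - a ^ m))" by simp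
    also have "\<dots> \<le> real (Suc m) * (real m * (1 - a ^ s))"
      using step.IH by (intro mult_left_mono) auto
    finally have "real m * (real s * (1 - a ^ Suc m)) \<le> real m * (real (Suc m) * (1 - a ^ s))"
      by (simp add: algebra_simps)
    then show ?thesis using m0 by simp
  qed
qed

lemma kept_bound:
  fixes pp :: real assumes "0 \<le> pp" "pp \<le> 1" "1 \<le> pp * real m" "s \<le> m"
  shows "(1 - 1 / exp 1) * real s / real m \<le> 1 - (1 - pp) ^ s"
proof -
  have m0: "real m > 0" using assms by (cases m) auto
  have "(1 - pp) ^ m \<le> exp (- pp) ^ m"
    using assms by (intro power_mono) (auto simp: exp_ge_add_one_self[of "-pp", simplified])
  also have "\<dots> = exp (- (pp * real m))" by (simp add: exp_of_nat_mult[symmetric] mult.commute)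
  also have "\<dots> \<le> exp (- 1)" using assms by simp
  finally have e: "(1 - pp) ^ m \<le> 1 / exp 1" by (simp add: exp_minus field_simps)
  have "(1 - 1 / exp 1) * real s \<le> real s * (1 - (1 - pp) ^ m)"
    using e by (simp add: mult_left_mono mult.commute)
  also have "\<dots> \<le> real m * (1 - (1 - pp) ^ s)" using conc[of "1 - pp" s m] assms by simp
  finally show ?thesis using m0 by (simp add: field_simps)
qed



lemma step:
  fixes V T :: "'a set" and P :: "'a \<Rightarrow> bool pmf" and B :: "'a \<Rightarrow> ('a \<Rightarrow> bool) \<Rightarrow> bool"
  assumes fin: "finite V" and TV: "T \<subseteq> V" and Tne: "T \<noteq> {}"
    and P: "\<forall>y\<in>T. P y = bernoulli_pmf pp" and pp: "0 \<le> pp" "pp \<le> 1" "1 \<le> pp * real (card T)"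
    and indep: "\<forall>y\<in>T. \<forall>S S'. (\<forall>u\<in>V. u \<notin> T \<longrightarrow> S u = S' u) \<longrightarrow> (B y S \<longleftrightarrow> B y S')"
    and q: "\<forall>y\<in>T. q \<le> measure_pmf.prob (Pi_pmf V False P) {S. B y S}"
    and q0: "0 \<le> q"
  shows "(1 - 1 / exp 1) * q \<le> measure_pmf.prob (Pi_pmf V False P) {S. \<exists>y\<in>T. S y \<and> B y S}"
proof -
  define N where "N = Pi_pmf V False P"
  define R where "R = V - T"
  define AA where "AA = Pi_pmf T False P"
  define BB where "BB = Pi_pmf R False P"
  define comb where "comb = (\<lambda>(f::'a\<Rightarrow>bool, g::'a\<Rightarrow>bool) x. if x \<in> R then f x else g x)"
  have finT: "finite T" using fin TV finite_subset by blast
  have finR: "finite R" using fin R_def by simp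
  have VRT: "V = R \<union> T" using TV R_def by auto
  have NN: "N = map_pmf comb (pair_pmf BB AA)"
    unfolding N_def BB_def AA_def comb_def VRT
    by (rule Pi_pmf_union) (use finR finT R_def in auto)
  define m where "m = card T"
  have m0: "real m > 0" using Tne finT m_def by (simp add: card_gt_0_iff)
  define c where "c = (1 - 1 / exp 1) / real m"
  have e1: "1 / exp 1 \<le> (1::real)" by simp
  have c0: "c \<ge> 0" unfolding c_def using m0 e1 by (simp add: divide_nonneg_nonneg)
  have Bcomb: "B y (comb (f, g)) \<longleftrightarrow> B y f" if "y \<in> T" for y f g
    using indep that unfolding comb_def R_def by auto
  have combT: "comb (f, g) y = g y" if "y \<in> T" for y f g
    using that unfolding comb_def R_def by auto
  have qB: "q \<le> measure_pmf.prob BB {f. B y f}" if y: "y \<in> T" for y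
  proof -
    have "measure_pmf.prob N {S. B y S} = measure_pmf.prob (pair_pmf BB AA) (comb -` {S. B y S})"
      unfolding NN by simp
    also have "comb -` {S. B y S} = fst -` {f. B y f}" using Bcomb[OF y] by auto
    also have "measure_pmf.prob (pair_pmf BB AA) (fst -` {f. B y f}) = measure_pmf.prob BB {f. B y f}"
      using measure_map_pmf[of fst "pair_pmf BB AA" "{f. B y f}"] by (simp add: map_fst_pair_pmf)
    finally show ?thesis using q y N_def by metis
  qed
  define E where "E = {S. \<exists>y\<in>T. S y \<and> B y S}"
  define Tf where "Tf = (\<lambda>f. {y\<in>T. B y f})"
  have inner: "(\<integral>\<^sup>+g. indicator E (comb (f, g)) \<partial>AA) \<ge> ennreal (c * real (card (Tf f)))" for f
  proof -
    have "(\<integral>\<^sup>+g. indicator E (comb (f, g)) \<partial>AA) = (\<integral>\<^sup>+g. indicator {g. \<exists>y\<in>Tf f. g y} g \<partial>AA)"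
      by (intro nn_integral_cong) (auto simp: E_def Tf_def indicator_def Bcomb combT)
    also have "\<dots> = emeasure AA {g. \<exists>y\<in>Tf f. g y}" by simp
    also have "\<dots> = ennreal (1 - (1 - pp) ^ card (Tf f))"
      unfolding AA_def measure_pmf.emeasure_eq_measure
      by (subst any_kept[OF finT]) (use P pp Tf_def in auto)
    finally have eq: "(\<integral>\<^sup>+g. indicator E (comb (f, g)) \<partial>AA) = ennreal (1 - (1 - pp) ^ card (Tf f))" .
    have "card (Tf f) \<le> m" unfolding m_def Tf_def by (intro card_mono finT) auto
    then have "c * real (card (Tf f)) \<le> 1 - (1 - pp) ^ card (Tf f)"
      using kept_bound[of pp m "card (Tf f)"] pp m_def unfolding c_def by simp
    then show ?thesis unfolding eq by (simp add: ennreal_leI)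
  qed
  have cardTf: "ennreal (c * real (card (Tf f))) = (\<Sum>y\<in>T. ennreal c * indicator {f. B y f} f)" for f
  proof -
    have "real (card (Tf f)) = (\<Sum>y\<in>T. indicator {f. B y f} f)"
      unfolding Tf_def using finT by (simp add: indicator_def sum.If_cases Collect_conj_eq)
    then have "ennreal (c * real (card (Tf f))) = ennreal (\<Sum>y\<in>T. c * indicator {f. B y f} f)"
      by (simp add: sum_distrib_left)
    also have "ennreal (\<Sum>y\<in>T. c * indicator {f. B y f} f) = (\<Sum>y\<in>T. ennreal (c * indicator {f. B y f} f))"
      using c0 by (intro sum_ennreal[symmetric]) auto
    also have "\<dots> = (\<Sum>y\<in>T. ennreal c * indicator {f. B y f} f)"
      using c0 by (intro sum.cong refl) (auto simp: indicator_def)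
    finally show ?thesis .
  qed
  have "emeasure N E = (\<integral>\<^sup>+x. indicator E x \<partial>N)" by simp
  also have "\<dots> = (\<integral>\<^sup>+x. indicator E (comb x) \<partial>pair_pmf BB AA)" unfolding NN by simp
  also have "\<dots> = (\<integral>\<^sup>+f. \<integral>\<^sup>+g. indicator E (comb (f, g)) \<partial>AA \<partial>BB)" by (rule nn_integral_pair_pmf')
  also have "\<dots> \<ge> (\<integral>\<^sup>+f. ennreal (c * real (card (Tf f))) \<partial>BB)"
    by (intro nn_integral_mono inner)
  finally have "(\<integral>\<^sup>+f. ennreal (c * real (card (Tf f))) \<partial>BB) \<le> emeasure N E" .
  moreover have "(\<integral>\<^sup>+f. ennreal (c * real (card (Tf f))) \<partial>BB) = (\<Sum>y\<in>T. ennreal c * emeasure BB {f. B y f})"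
    unfolding cardTf
    by (subst nn_integral_sum) (auto simp: nn_integral_cmult)
  moreover have "(\<Sum>y\<in>T. ennreal c * emeasure BB {f. B y f}) \<ge> (\<Sum>y\<in>T. ennreal (c * q))"
    using qB c0 q0
    by (intro sum_mono) (auto simp: measure_pmf.emeasure_eq_measure ennreal_mult[symmetric] intro!: ennreal_leI mult_left_mono)
  moreover have "(\<Sum>y\<in>T. ennreal (c * q)) = ennreal ((1 - 1 / exp 1) * q)"
  proof -
    have "(\<Sum>y\<in>T. ennreal (c * q)) = ennreal (\<Sum>y\<in>T. c * q)"
      using c0 q0 by (intro sum_ennreal) auto
    also have "(\<Sum>y\<in>T. c * q) = (1 - 1 / exp 1) * q"
      using m0 unfolding c_def m_def by (simp add: field_simps)
    finally show ?thesis .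
  qed
  ultimately have "ennreal ((1 - 1 / exp 1) * q) \<le> emeasure N E" by order
  then show ?thesis unfolding N_def E_def measure_pmf.emeasure_eq_measure
    by (simp add: ennreal_le_iff measure_nonneg)
qed



fun reach :: "('a \<Rightarrow> 'a \<Rightarrow> bool) \<Rightarrow> 'a \<Rightarrow> nat \<Rightarrow> 'a \<Rightarrow> ('a \<Rightarrow> bool) \<Rightarrow> bool" where
  "reach A v 0 x S = A x v"
| "reach A v (Suc r) x S = (\<exists>y. A x y \<and> S y \<and> reach A v r y S)"

fun good :: "('a \<Rightarrow> 'a \<Rightarrow> bool) \<Rightarrow> 'a \<Rightarrow> nat list \<Rightarrow> 'a \<Rightarrow> bool" where
  "good A v [] x = A x v"
| "good A v (j # js) x = (\<exists>T. finite T \<and> 2 ^ j \<le> card T \<and> (\<forall>y\<in>T. A x y \<and> good A v js y))"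

lemma mod_neq:
  fixes c k i h :: nat
  assumes "k < i" "i < k + h"
  shows "(c + k) mod h \<noteq> (c + i) mod h"
proof
  assume eq: "(c + k) mod h = (c + i) mod h"
  have "h dvd (c + i) - (c + k)" using eq assms by (subst mod_eq_dvd_iff_nat[symmetric]) auto
  then have "h dvd i - k" by simp
  moreover have "0 < i - k" "i - k < h" using assms by auto
  ultimately show False using nat_dvd_not_less by blast
qed

lemma col_arc_V:
  assumes "simple_graph V E" "col_arc E \<phi> h x y"
  shows "x \<in> V" "y \<in> V" "\<phi> y = (\<phi> x + 1) mod h"
  using assms unfolding simple_graph_def col_arc_def by auto

lemma reach_dep:
  assumes G: "simple_graph V E"
  shows "\<forall>x k. \<phi> x = (\<phi> v + k) mod h \<longrightarrow>
    (\<forall>u\<in>V. (\<exists>i. k < i \<and> i \<le> k + r \<and> \<phi> u = (\<phi> v + i) mod h) \<longrightarrow> S u = S' u) \<longrightarrow>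
    reach (col_arc E \<phi> h) v r x S = reach (col_arc E \<phi> h) v r x S'"
proof (induction r)
  case 0 then show ?case by simp
next
  case (Suc r)
  show ?case
  proof (intro allI impI)
    fix x k
    assume cx: "\<phi> x = (\<phi> v + k) mod h"
      and ag: "\<forall>u\<in>V. (\<exists>i. k < i \<and> i \<le> k + Suc r \<and> \<phi> u = (\<phi> v + i) mod h) \<longrightarrow> S u = S' u"
    have yy: "S y = S' y \<and> (reach (col_arc E \<phi> h) v r y S = reach (col_arc E \<phi> h) v r y S')"
      if a: "col_arc E \<phi> h x y" for y
    proof
      have yV: "y \<in> V" and cy: "\<phi> y = (\<phi> x + 1) mod h" using col_arc_V[OF G a] by auto
      have cy': "\<phi> y = (\<phi> v + Suc k) mod h" using cy cx by (simp add: mod_Suc_eq)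
      show "S y = S' y" using ag yV cy' by (metis Suc_le_mono add_Suc_right le_add1 lessI)
      have ag': "\<forall>u\<in>V. (\<exists>i. Suc k < i \<and> i \<le> Suc k + r \<and> \<phi> u = (\<phi> v + i) mod h) \<longrightarrow> S u = S' u"
        using ag by (metis Suc_lessD add_Suc add_Suc_right)
      show "reach (col_arc E \<phi> h) v r y S = reach (col_arc E \<phi> h) v r y S'"
        using Suc.IH cy' ag' by blast
    qed
    show "reach (col_arc E \<phi> h) v (Suc r) x S = reach (col_arc E \<phi> h) v (Suc r) x S'"
      using yy by auto
  qed
qed

lemma reach_prob:
  assumes G: "simple_graph V E"
  shows "\<forall>x k. k + length js + 1 = h \<longrightarrow> \<phi> x = (\<phi> v + k) mod h \<longrightarrow> good (col_arc E \<phi> h) v js x \<longrightarrow>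
    (\<forall>i<length js. 0 \<le> p ((\<phi> v + k + 1 + i) mod h) \<and> p ((\<phi> v + k + 1 + i) mod h) \<le> 1
        \<and> 1 \<le> p ((\<phi> v + k + 1 + i) mod h) * 2 ^ (js ! i)) \<longrightarrow>
    (1 - 1 / exp 1) ^ length js \<le> measure_pmf.prob (keep_pmf V \<phi> p) {S. reach (col_arc E \<phi> h) v (length js) x S}"
proof (induction js)
  case Nil
  show ?case by simp
next
  case (Cons j js)
  let ?A = "col_arc E \<phi> h"
  show ?case
  proof (intro allI impI)
    fix x k
    assume len: "k + length (j # js) + 1 = h" and cx: "\<phi> x = (\<phi> v + k) mod h"
      and gx: "good ?A v (j # js) x"
      and pc: "\<forall>i<length (j # js). 0 \<le> p ((\<phi> v + k + 1 + i) mod h) \<and> p ((\<phi> v + k + 1 + i) mod h) \<le> 1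
        \<and> 1 \<le> p ((\<phi> v + k + 1 + i) mod h) * 2 ^ ((j # js) ! i)"
    obtain T where finT: "finite T" and cT: "2 ^ j \<le> card T" and TT: "\<forall>y\<in>T. ?A x y \<and> good ?A v js y"
      using gx by auto
    define pp where "pp = p ((\<phi> v + k + 1) mod h)"
    have pp: "0 \<le> pp" "pp \<le> 1" "1 \<le> pp * 2 ^ j" using pc[rule_format, of 0] pp_def by auto
    have Tne: "T \<noteq> {}" using cT by (metis card.empty le_0_eq power_not_zero zero_neq_numeral)
    have TV: "T \<subseteq> V" using TT col_arc_V[OF G] by blast
    have finV: "finite V" using G simple_graph_def by blast
    have cyT: "\<phi> y = (\<phi> v + (k + 1)) mod h" if "y \<in> T" for y
      using TT that col_arc_V(3)[OF G] cx by (metis add.assoc mod_add_left_eq)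
    have ppT: "1 \<le> pp * real (card T)"
    proof -
      have "(2::real) ^ j \<le> real (card T)" using cT
        by (metis of_nat_le_iff of_nat_numeral of_nat_power)
      then have "pp * 2 ^ j \<le> pp * real (card T)" using pp
        by (intro mult_left_mono) auto
      then show ?thesis using pp by linarith
    qed
    have step': "(1 - 1 / exp 1) * (1 - 1 / exp 1) ^ length js \<le>
      measure_pmf.prob (Pi_pmf V False (\<lambda>u. bernoulli_pmf (p (\<phi> u))))
        {S. \<exists>y\<in>T. S y \<and> reach ?A v (length js) y S}"
    proof (rule step[OF finV TV Tne _ pp(1,2) ppT])
      show "\<forall>y\<in>T. bernoulli_pmf (p (\<phi> y)) = bernoulli_pmf pp" using cyT pp_def by simp
      have "1 / exp 1 \<le> (1::real)" by simp
      then show "0 \<le> (1 - 1 / exp 1::real) ^ length js" by (intro zero_le_power) simp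
      show "\<forall>y\<in>T. \<forall>S S'. (\<forall>u\<in>V. u \<notin> T \<longrightarrow> S u = S' u) \<longrightarrow>
          reach ?A v (length js) y S = reach ?A v (length js) y S'"
      proof (intro ballI allI impI)
        fix y and S S' :: "'a \<Rightarrow> bool" assume yT: "y \<in> T" and ag: "\<forall>u\<in>V. u \<notin> T \<longrightarrow> S u = S' u"
        have ag': "\<forall>u\<in>V. (\<exists>i. k + 1 < i \<and> i \<le> k + 1 + length js \<and> \<phi> u = (\<phi> v + i) mod h) \<longrightarrow> S u = S' u"
        proof (intro ballI impI)
          fix u assume uV: "u \<in> V" and "\<exists>i. k + 1 < i \<and> i \<le> k + 1 + length js \<and> \<phi> u = (\<phi> v + i) mod h"
          then obtain i where i: "k + 1 < i" "i \<le> k + 1 + length js" "\<phi> u = (\<phi> v + i) mod h" by blast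
          have "u \<notin> T"
          proof
            assume "u \<in> T"
            then have "\<phi> u = (\<phi> v + (k + 1)) mod h" by (rule cyT)
            moreover have "(\<phi> v + (k + 1)) mod h \<noteq> (\<phi> v + i) mod h"
              using i len by (intro mod_neq) auto
            ultimately show False using i by simp
          qed
          then show "S u = S' u" using ag uV by blast
        qed
        show "reach ?A v (length js) y S = reach ?A v (length js) y S'"
          using reach_dep[OF G, rule_format, where x=y and k="k + 1" and r="length js" and S=S and S'=S'] cyT[OF yT] ag' by blast
      qed
      show "\<forall>y\<in>T. (1 - 1 / exp 1) ^ length js \<le>
          measure_pmf.prob (Pi_pmf V False (\<lambda>u. bernoulli_pmf (p (\<phi> u)))) {S. reach ?A v (length js) y S}"
      proof
        fix y assume yT: "y \<in> T"
        have pc': "\<forall>i<length js. 0 \<le> p ((\<phi> v + (k + 1) + 1 + i) mod h) \<and> p ((\<phi> v + (k + 1) + 1 + i) mod h) \<le> 1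
          \<and> 1 \<le> p ((\<phi> v + (k + 1) + 1 + i) mod h) * 2 ^ (js ! i)"
        proof (intro allI impI)
          fix i assume "i < length js"
          then show "0 \<le> p ((\<phi> v + (k + 1) + 1 + i) mod h) \<and> p ((\<phi> v + (k + 1) + 1 + i) mod h) \<le> 1
          \<and> 1 \<le> p ((\<phi> v + (k + 1) + 1 + i) mod h) * 2 ^ (js ! i)"
            using pc[rule_format, of "Suc i"] by (simp add: add.assoc)
        qed
        show "(1 - 1 / exp 1) ^ length js \<le>
          measure_pmf.prob (Pi_pmf V False (\<lambda>u. bernoulli_pmf (p (\<phi> u)))) {S. reach ?A v (length js) y S}"
          using Cons.IH[rule_format, of "k + 1" y] len cyT[OF yT] TT yT pc'
          unfolding keep_pmf_def by simp
      qed
    qed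
    have sub: "{S. \<exists>y\<in>T. S y \<and> reach ?A v (length js) y S} \<subseteq> {S. reach ?A v (length (j # js)) x S}"
      using TT by auto
    show "(1 - 1 / exp 1) ^ length (j # js) \<le>
      measure_pmf.prob (keep_pmf V \<phi> p) {S. reach ?A v (length (j # js)) x S}"
      using order_trans[OF step' measure_pmf.finite_measure_mono[OF sub]] unfolding keep_pmf_def by simp
  qed
qed



fun cnt :: "'a set \<Rightarrow> ('a \<Rightarrow> 'a \<Rightarrow> bool) \<Rightarrow> 'a \<Rightarrow> nat \<Rightarrow> 'a \<Rightarrow> nat" where
  "cnt V A v 0 x = (if A x v then 1 else 0)"
| "cnt V A v (Suc r) x = (\<Sum>y\<in>{y\<in>V. A x y}. cnt V A v r y)"

lemma pow_bound:
  fixes K :: nat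
  shows "2 * real (K + 1) ^ r * (2 * real (K + 1)) ^ (r ^ 2) \<le> (2 * real (K + 1)) ^ (Suc r ^ 2)"
proof -
  define B where "B = 2 * real (K + 1)"
  have B2: "2 \<le> B" unfolding B_def by simp
  have "2 * real (K + 1) ^ r * B ^ (r ^ 2) \<le> B * B ^ r * B ^ (r ^ 2)"
    using B2 by (intro mult_right_mono mult_mono power_mono) (auto simp: B_def)
  also have "\<dots> = B ^ (1 + r + r ^ 2)" by (simp add: power_add)
  also have "\<dots> \<le> B ^ (Suc r ^ 2)"
    using B2 by (intro power_increasing) (auto simp: power2_eq_square)
  finally show ?thesis unfolding B_def .
qed

lemma comb:
  fixes V :: "'a set" and A :: "'a \<Rightarrow> 'a \<Rightarrow> bool" and K :: nat
  assumes finV: "finite V" and Kb: "\<forall>j. 2 ^ j \<le> card V \<longrightarrow> j \<le> K"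
  shows "\<forall>x. 0 < cnt V A v r x \<longrightarrow> (\<exists>js. length js = r \<and> set js \<subseteq> {..K} \<and> good A v js x \<and>
     real (cnt V A v r x) \<le> (2 * real (K + 1)) ^ (r ^ 2) * 2 ^ sum_list js)"
proof (induction r)
  case 0
  show ?case by (auto split: if_splits intro!: exI[of _ "[]"])
next
  case (Suc r)
  show ?case
  proof (intro allI impI)
    fix x assume pos: "0 < cnt V A v (Suc r) x"
    define F where "F = (2 * real (K + 1)) ^ (r ^ 2)"
    define Y where "Y = {y\<in>V. A x y}"
    define Yp where "Yp = {y\<in>Y. 0 < cnt V A v r y}"
    define P where "P = (\<lambda>y js. length js = r \<and> set js \<subseteq> {..K} \<and> good A v js y \<and>
       real (cnt V A v r y) \<le> F * 2 ^ sum_list js)"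
    define J where "J = (\<lambda>y. SOME js. P y js)"
    have PJ: "P y (J y)" if "y \<in> Yp" for y
    proof -
      have "\<exists>js. P y js" using Suc.IH that unfolding Yp_def P_def F_def by blast
      then show ?thesis unfolding J_def by (rule someI_ex)
    qed
    define L where "L = {js. set js \<subseteq> {..K} \<and> length js = r}"
    have finL: "finite L" unfolding L_def by (intro finite_lists_length_eq) simp
    have cardL: "card L = (K + 1) ^ r" unfolding L_def by (subst card_lists_length_eq) auto
    have Lne: "L \<noteq> {}" using cardL by auto
    have finY: "finite Y" "finite Yp" using finV unfolding Y_def Yp_def by auto
    have JL: "J ` Yp \<subseteq> L" using PJ unfolding L_def P_def by auto
    have tot: "cnt V A v (Suc r) x = (\<Sum>y\<in>Yp. cnt V A v r y)"
      unfolding Yp_def by (simp add: Y_def[symmetric]) (rule sum.mono_neutral_right[OF finY(1)], auto)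
    define s where "s = (\<lambda>l. \<Sum>y\<in>{y. y \<in> Yp \<and> J y = l}. cnt V A v r y)"
    have grp: "(\<Sum>l\<in>L. s l) = cnt V A v (Suc r) x"
      unfolding tot s_def by (rule sum.group[OF finY(2) finL JL])
    have "\<exists>l\<in>L. real (cnt V A v (Suc r) x) \<le> real (card L) * real (s l)"
    proof (rule ccontr)
      assume "\<not> ?thesis"
      then have lt: "\<forall>l\<in>L. real (s l) < real (cnt V A v (Suc r) x) / real (card L)"
        using finL Lne by (auto simp: field_simps card_gt_0_iff not_le)
      have "real (cnt V A v (Suc r) x) = (\<Sum>l\<in>L. real (s l))" using grp by (metis of_nat_sum)
      also have "\<dots> < (\<Sum>l\<in>L. real (cnt V A v (Suc r) x) / real (card L))"
        using lt finL Lne by (intro sum_strict_mono) auto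
      also have "\<dots> = real (cnt V A v (Suc r) x)" using finL Lne by (simp add: card_gt_0_iff)
      finally show False by simp
    qed
    then obtain l where lL: "l \<in> L" and big: "real (cnt V A v (Suc r) x) \<le> real (card L) * real (s l)" by blast
    define G where "G = {y. y \<in> Yp \<and> J y = l}"
    have finG: "finite G" using finY unfolding G_def by auto
    have sl0: "0 < s l"
    proof (rule ccontr)
      assume "\<not> 0 < s l"
      then have "s l = 0" by simp
      then show False using big pos by (simp del: cnt.simps)
    qed
    have Gne: "G \<noteq> {}"
    proof
      assume "G = {}"
      moreover have "s l = sum (cnt V A v r) G" unfolding s_def G_def by (simp del: cnt.simps)
      ultimately have "s l = 0" by (simp del: cnt.simps)
      then show False using sl0 by simp
    qed
    have cG1: "1 \<le> card G" using Gne finG by (simp add: Suc_le_eq card_gt_0_iff)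
    obtain j where j1: "2 ^ j \<le> card G" and j2: "card G < 2 ^ (j + 1)"
      using ex_power_ivl1[of 2 "card G"] cG1 by auto
    have GV: "G \<subseteq> V" unfolding G_def Yp_def Y_def by auto
    have jK: "j \<le> K" using Kb j1 card_mono[OF finV GV] by auto
    have sG: "real (s l) \<le> real (card G) * (F * 2 ^ sum_list l)"
    proof -
      have "real (s l) = (\<Sum>y\<in>G. real (cnt V A v r y))" unfolding s_def G_def by simp
      also have "\<dots> \<le> (\<Sum>y\<in>G. F * 2 ^ sum_list l)"
        using PJ unfolding G_def P_def by (intro sum_mono) auto
      also have "\<dots> = real (card G) * (F * 2 ^ sum_list l)" by simp
      finally show ?thesis .
    qed
    have F0: "0 \<le> F" unfolding F_def by simp
    have "real (cnt V A v (Suc r) x) \<le> real (card L) * (real (card G) * (F * 2 ^ sum_list l))"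
      using big sG by (meson mult_left_mono of_nat_0_le_iff order_trans)
    also have "\<dots> \<le> real (card L) * (2 ^ (j + 1) * (F * 2 ^ sum_list l))"
    proof -
      have "real (card G) \<le> 2 ^ (j + 1)" using j2
        by (metis less_imp_le of_nat_le_iff of_nat_numeral of_nat_power)
      then show ?thesis using F0 by (intro mult_left_mono mult_right_mono) auto
    qed
    also have "\<dots> = (2 * real (K + 1) ^ r * F) * 2 ^ sum_list (j # l)"
      by (simp add: cardL power_add)
    also have "\<dots> \<le> (2 * real (K + 1)) ^ (Suc r ^ 2) * 2 ^ sum_list (j # l)"
      unfolding F_def by (intro mult_right_mono pow_bound) auto
    finally have bound: "real (cnt V A v (Suc r) x) \<le> (2 * real (K + 1)) ^ (Suc r ^ 2) * 2 ^ sum_list (j # l)" .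
    have Gy: "\<forall>y\<in>G. A x y \<and> good A v l y"
    proof
      fix y assume yG: "y \<in> G"
      then have "y \<in> Yp" "J y = l" unfolding G_def by auto
      then show "A x y \<and> good A v l y" using PJ[of y] unfolding Yp_def Y_def P_def by auto
    qed
    have goodx: "good A v (j # l) x"
      unfolding good.simps using finG j1 Gy by blast
    show "\<exists>js. length js = Suc r \<and> set js \<subseteq> {..K} \<and> good A v js x \<and>
       real (cnt V A v (Suc r) x) \<le> (2 * real (K + 1)) ^ (Suc r ^ 2) * 2 ^ sum_list js"
      using lL jK goodx bound unfolding L_def by (intro exI[of _ "j # l"]) auto
  qed
qed



fun wpath :: "('a \<Rightarrow> 'a \<Rightarrow> bool) \<Rightarrow> 'a \<Rightarrow> 'a \<Rightarrow> 'a list \<Rightarrow> bool" where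
  "wpath A v x [] = A x v"
| "wpath A v x (y # ys) = (A x y \<and> wpath A v y ys)"

lemma wpath_set: "(\<forall>x y. A x y \<longrightarrow> y \<in> V) \<Longrightarrow> wpath A v x ws \<Longrightarrow> set ws \<subseteq> V"
  by (induction ws arbitrary: x) auto

lemma card_walks:
  assumes finV: "finite V" and AV: "\<forall>x y. A x y \<longrightarrow> y \<in> V"
  shows "finite {ws. length ws = r \<and> wpath A v x ws} \<and> card {ws. length ws = r \<and> wpath A v x ws} = cnt V A v r x"
proof (induction r arbitrary: x)
  case 0
  have "{ws. length ws = 0 \<and> wpath A v x ws} = (if A x v then {[]} else {})" by auto
  then show ?case by simp
next
  case (Suc r)
  have eq: "{ws. length ws = Suc r \<and> wpath A v x ws} =
    (\<Union>y\<in>{y\<in>V. A x y}. (Cons y) ` {ws. length ws = r \<and> wpath A v y ws})"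
  proof (intro equalityI subsetI)
    fix ws assume "ws \<in> {ws. length ws = Suc r \<and> wpath A v x ws}"
    then obtain y ys where "ws = y # ys" "length ys = r" "A x y" "wpath A v y ys"
      by (auto simp: length_Suc_conv)
    moreover have "y \<in> V" using AV \<open>A x y\<close> by blast
    ultimately show "ws \<in> (\<Union>y\<in>{y\<in>V. A x y}. (Cons y) ` {ws. length ws = r \<and> wpath A v y ws})"
      by blast
  qed auto
  have fin: "finite {y\<in>V. A x y}" using finV by simp
  have "card (\<Union>y\<in>{y\<in>V. A x y}. (Cons y) ` {ws. length ws = r \<and> wpath A v y ws})
      = (\<Sum>y\<in>{y\<in>V. A x y}. card ((Cons y) ` {ws. length ws = r \<and> wpath A v y ws}))"
    using Suc.IH fin by (intro card_UN_disjoint) auto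
  also have "\<dots> = (\<Sum>y\<in>{y\<in>V. A x y}. cnt V A v r y)"
    using Suc.IH by (intro sum.cong refl) (simp add: card_image)
  finally show ?case unfolding eq using Suc.IH fin by simp
qed

lemma wpath_map:
  "\<forall>f. (\<forall>i<m. A (f i) (f (Suc i))) \<longrightarrow> A (f m) v \<longrightarrow> wpath A v (f 0) (map f [1..<Suc m])"
proof (induction m)
  case 0 then show ?case by simp
next
  case (Suc m)
  show ?case
  proof (intro allI impI)
    fix f :: "nat \<Rightarrow> 'a"
    assume a1: "\<forall>i<Suc m. A (f i) (f (Suc i))" and a2: "A (f (Suc m)) v"
    have "wpath A v ((f \<circ> Suc) 0) (map (f \<circ> Suc) [1..<Suc m])"
      using Suc.IH[rule_format, of "f \<circ> Suc"] a1 a2 by (simp del: upt_Suc)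
    moreover have "map f [1..<Suc (Suc m)] = f 1 # map (f \<circ> Suc) [1..<Suc m]"
      by (simp add: upt_conv_Cons map_Suc_upt[symmetric] del: upt_Suc)
    ultimately show "wpath A v (f 0) (map f [1..<Suc (Suc m)])" using a1 by (simp del: upt_Suc)
  qed
qed

lemma rot:
  fixes c :: "nat \<Rightarrow> 'a"
  assumes "i0 < h"
  shows "{(c ((i0 + i) mod h), c ((i0 + (i + 1) mod h) mod h)) | i. i < h} = {(c i, c ((i + 1) mod h)) | i. i < h}"
proof (intro equalityI subsetI)
  fix z assume "z \<in> {(c ((i0 + i) mod h), c ((i0 + (i + 1) mod h) mod h)) | i. i < h}"
  then obtain i where i: "i < h" "z = (c ((i0 + i) mod h), c ((i0 + (i + 1) mod h) mod h))" by blast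
  have "(i0 + (i + 1) mod h) mod h = ((i0 + i) mod h + 1) mod h" by (simp add: mod_add_right_eq mod_Suc_eq add.assoc)
  then show "z \<in> {(c i, c ((i + 1) mod h)) | i. i < h}" using i assms
    by (intro CollectI exI[of _ "(i0 + i) mod h"]) auto
next
  fix z assume "z \<in> {(c i, c ((i + 1) mod h)) | i. i < h}"
  then obtain j where j: "j < h" "z = (c j, c ((j + 1) mod h))" by blast
  define i where "i = (j + (h - i0)) mod h"
  have hi: "(i0 + i) mod h = j"
  proof -
    have "(i0 + i) mod h = (i0 + (j + (h - i0))) mod h" unfolding i_def by (simp add: mod_add_right_eq)
    also have "i0 + (j + (h - i0)) = j + h" using assms by simp
    also have "(j + h) mod h = j" using j by simp
    finally show ?thesis .
  qed
  have "(i0 + (i + 1) mod h) mod h = ((i0 + i) mod h + 1) mod h" by (simp add: mod_add_right_eq mod_Suc_eq add.assoc)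
  then show "z \<in> {(c ((i0 + i) mod h), c ((i0 + (i + 1) mod h) mod h)) | i. i < h}"
    using j hi assms unfolding i_def by (intro CollectI exI[of _ i]) (auto simp: i_def)
qed



lemma tcyc_le:
  assumes G: "simple_graph V E" and h1: "1 \<le> h"
  shows "t_cycles V E \<phi> h v \<le> cnt V (col_arc E \<phi> h) v (h - 1) v"
proof -
  let ?A = "col_arc E \<phi> h"
  define W where "W = {ws. length ws = h - 1 \<and> wpath ?A v v ws}"
  have finV: "finite V" using G simple_graph_def by blast
  have AV: "\<forall>x y. ?A x y \<longrightarrow> y \<in> V" using col_arc_V[OF G] by blast
  have W: "finite W" "card W = cnt V ?A v (h - 1) v" using card_walks[OF finV AV] unfolding W_def by auto
  define Fm where "Fm = (\<lambda>ws. {((v # ws) ! i, (v # ws) ! ((i + 1) mod h)) | i. i < h})"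
  define Cyc where "Cyc = {C \<in> dir_cycles V ?A h. v \<in> fst ` C}"
  have sub: "Cyc \<subseteq> Fm ` W"
  proof
    fix C assume "C \<in> Cyc"
    then have C1: "C \<in> dir_cycles V ?A h" and C2: "v \<in> fst ` C" unfolding Cyc_def by auto
    from C1 obtain c where Cc: "C = {(c i, c ((i + 1) mod h)) | i. i < h}"
      and cV: "\<forall>i<h. c i \<in> V" and cA: "\<forall>i<h. ?A (c i) (c ((i + 1) mod h))"
      unfolding dir_cycles_def by blast
    from C2 obtain i0 where i0: "i0 < h" "c i0 = v" unfolding Cc by auto
    define c' where "c' = (\<lambda>k. c ((i0 + k) mod h))"
    define ws where "ws = map c' [1..<Suc (h - 1)]"
    have c'0: "c' 0 = v" unfolding c'_def using i0 by simp
    have arcs: "?A (c' i) (c' (Suc i))" for i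
    proof -
      have "?A (c ((i0 + i) mod h)) (c (((i0 + i) mod h + 1) mod h))" using cA h1 by simp
      moreover have "((i0 + i) mod h + 1) mod h = (i0 + Suc i) mod h" by (simp add: mod_Suc_eq)
      ultimately show ?thesis unfolding c'_def by simp
    qed
    have last: "c' (h - 1) = c' (Suc (h - 1) - 1)" by simp
    have cl: "c' h = v" unfolding c'_def using i0 by simp
    have lastA: "?A (c' (h - 1)) v" using arcs[of "h - 1"] cl h1 by simp
    have "wpath ?A v (c' 0) ws"
      unfolding ws_def using wpath_map[rule_format, of "h - 1" ?A c' v] arcs lastA by blast
    moreover have "length ws = h - 1" unfolding ws_def by (simp del: upt_Suc)
    ultimately have wsW: "ws \<in> W" unfolding W_def using c'0 by simp
    have nth: "(v # ws) ! i = c' i" if "i < h" for i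
    proof (cases i)
      case 0 then show ?thesis using c'0 by simp
    next
      case (Suc k)
      then have "k < h - 1" using that by simp
      then show ?thesis unfolding ws_def using Suc h1 by (simp add: nth_map)
    qed
    have eqf: "((v # ws) ! i, (v # ws) ! ((i + 1) mod h)) = (c' i, c' ((i + 1) mod h))" if "i < h" for i
      using nth that h1 by simp
    have "Fm ws = (\<lambda>i. ((v # ws) ! i, (v # ws) ! ((i + 1) mod h))) ` {i. i < h}"
      unfolding Fm_def by (rule setcompr_eq_image)
    also have "\<dots> = (\<lambda>i. (c' i, c' ((i + 1) mod h))) ` {i. i < h}"
      by (rule image_cong[OF refl]) (use eqf in blast)
    also have "\<dots> = {(c' i, c' ((i + 1) mod h)) | i. i < h}"
      by (rule setcompr_eq_image[symmetric])
    also have "\<dots> = C" unfolding c'_def Cc by (rule rot[OF i0(1)])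
    finally show "C \<in> Fm ` W" using wsW by (metis image_eqI)
  qed
  have "t_cycles V E \<phi> h v = card Cyc" unfolding t_cycles_def Cyc_def by simp
  also have "\<dots> \<le> card (Fm ` W)" using sub W(1) by (intro card_mono) auto
  also have "\<dots> \<le> card W" using W(1) by (rule card_image_le)
  finally show ?thesis using W(2) by simp
qed

lemma reach_walk:
  "reach A v r x S \<Longrightarrow> \<exists>w. w 0 = x \<and> (\<forall>i<r. A (w i) (w (Suc i)) \<and> S (w (Suc i))) \<and> A (w r) v"
proof (induction r arbitrary: x)
  case 0 then show ?case by (intro exI[of _ "\<lambda>_. x"]) simp
next
  case (Suc r)
  then obtain y where y: "A x y" "S y" "reach A v r y S" by auto
  then obtain w where w: "w 0 = y" "\<forall>i<r. A (w i) (w (Suc i)) \<and> S (w (Suc i))" "A (w r) v"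
    using Suc.IH by blast
  define w' where "w' = (\<lambda>i. if i = 0 then x else w (i - 1))"
  have "\<forall>i<Suc r. A (w' i) (w' (Suc i)) \<and> S (w' (Suc i))"
  proof (intro allI impI)
    fix i assume "i < Suc r"
    then show "A (w' i) (w' (Suc i)) \<and> S (w' (Suc i))"
      using w y unfolding w'_def by (cases i) auto
  qed
  moreover have "A (w' (Suc r)) v" using w unfolding w'_def by simp
  moreover have "w' 0 = x" unfolding w'_def by simp
  ultimately show ?case by blast
qed

lemma reach_cycle:
  assumes G: "simple_graph V E" and h2: "2 \<le> h" and vh: "\<phi> v < h" and vV: "v \<in> V"
    and Sv: "S v" and R: "reach (col_arc E \<phi> h) v (h - 1) v S"
  shows "\<exists>C \<in> dir_cycles {u \<in> V. S u} (col_arc E \<phi> h) h. v \<in> fst ` C"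
proof -
  let ?A = "col_arc E \<phi> h"
  obtain w where w0: "w 0 = v" and wA: "\<forall>i<h - 1. ?A (w i) (w (Suc i)) \<and> S (w (Suc i))"
    and wl: "?A (w (h - 1)) v"
    using reach_walk[OF R] by blast
  have col: "i \<le> h - 1 \<Longrightarrow> \<phi> (w i) = (\<phi> v + i) mod h" for i
  proof (induction i)
    case 0 then show ?case using w0 vh by simp
  next
    case (Suc i)
    have "?A (w i) (w (Suc i))" using wA Suc.prems by simp
    then have "\<phi> (w (Suc i)) = (\<phi> (w i) + 1) mod h" by (rule col_arc_V(3)[OF G])
    moreover have "\<phi> (w i) = (\<phi> v + i) mod h" using Suc.IH Suc.prems by simp
    ultimately show ?case by (simp add: mod_Suc_eq)
  qed
  have inj: "inj_on w {..<h}"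
  proof (rule inj_onI)
    fix i j assume i: "i \<in> {..<h}" and j: "j \<in> {..<h}" and eq: "w i = w j"
    show "i = j"
    proof (rule ccontr)
      assume ne: "i \<noteq> j"
      have ci: "\<phi> (w i) = (\<phi> v + i) mod h" and cj: "\<phi> (w j) = (\<phi> v + j) mod h"
        using i j col by auto
      show False
      proof (cases "i < j")
        case True
        then have "(\<phi> v + i) mod h \<noteq> (\<phi> v + j) mod h" using j by (intro mod_neq) auto
        then show False using ci cj eq by simp
      next
        case False
        then have "j < i" using ne by simp
        then have "(\<phi> v + j) mod h \<noteq> (\<phi> v + i) mod h" using i by (intro mod_neq) auto
        then show False using ci cj eq by simp
      qed
    qed
  qed
  have mem: "\<forall>i<h. w i \<in> {u \<in> V. S u}"
  proof (intro allI impI)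
    fix i assume i: "i < h"
    show "w i \<in> {u \<in> V. S u}"
    proof (cases i)
      case 0 then show ?thesis using w0 vV Sv by simp
    next
      case (Suc k)
      then have "k < h - 1" using i by simp
      then show ?thesis using wA col_arc_V(2)[OF G] Suc by blast
    qed
  qed
  have arc: "\<forall>i<h. ?A (w i) (w ((i + 1) mod h))"
  proof (intro allI impI)
    fix i assume i: "i < h"
    show "?A (w i) (w ((i + 1) mod h))"
    proof (cases "i < h - 1")
      case True then show ?thesis using wA by simp
    next
      case False
      then have "i = h - 1" using i by simp
      then show ?thesis using wl w0 h2 by simp
    qed
  qed
  define C where "C = {(w i, w ((i + 1) mod h)) | i. i < h}"
  have "C \<in> dir_cycles {u \<in> V. S u} ?A h"
    unfolding dir_cycles_def C_def using mem inj arc by blast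
  moreover have "v \<in> fst ` C" unfolding C_def using w0 h2
    by (intro image_eqI[of _ _ "(w 0, w ((0 + 1) mod h))"]) auto
  ultimately show ?thesis by blast
qed



lemma reduce_list:
  fixes js :: "nat list"
  shows "J \<le> sum_list js \<Longrightarrow> \<exists>js'. length js' = length js \<and> (\<forall>i<length js. js' ! i \<le> js ! i) \<and> sum_list js' = J"
proof (induction js arbitrary: J)
  case Nil then show ?case by simp
next
  case (Cons a js)
  show ?case
  proof (cases "J \<le> sum_list js")
    case True
    then obtain js'' where "length js'' = length js" "\<forall>i<length js. js'' ! i \<le> js ! i" "sum_list js'' = J"
      using Cons.IH by blast
    then show ?thesis
      by (intro exI[of _ "0 # js''"]) (auto simp: nth_Cons split: nat.splits)
  next
    case False
    then show ?thesis using Cons.prems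
      by (intro exI[of _ "(J - sum_list js) # js"]) (auto simp: nth_Cons split: nat.splits)
  qed
qed

lemma good_mono:
  "good A v js x \<Longrightarrow> length js' = length js \<Longrightarrow> \<forall>i<length js. js' ! i \<le> js ! i \<Longrightarrow> good A v js' x"
proof (induction js arbitrary: js' x)
  case Nil then show ?case by simp
next
  case (Cons a js)
  then obtain b bs where js': "js' = b # bs" by (cases js') auto
  have ba: "b \<le> a" using Cons.prems(3) js' by force
  have bs1: "length bs = length js" using Cons.prems(2) js' by simp
  have bs2: "\<forall>i<length js. bs ! i \<le> js ! i"
  proof (intro allI impI)
    fix i assume "i < length js"
    then show "bs ! i \<le> js ! i" using Cons.prems(3) js' by (metis Suc_less_eq length_Cons nth_Cons_Suc)
  qed
  note bs = bs1 bs2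
  obtain T where T: "finite T" "2 ^ a \<le> card T" "\<forall>y\<in>T. A x y \<and> good A v js y"
    using Cons.prems(1) by auto
  have "(2::nat) ^ b \<le> 2 ^ a" using ba by (simp add: power_increasing)
  then have "2 ^ b \<le> card T" using T(2) by linarith
  moreover have "\<forall>y\<in>T. A x y \<and> good A v bs y" using T(3) Cons.IH bs by blast
  ultimately show ?case using T(1) js' by auto
qed



theorem lemma10:
  fixes V :: "'a set" and E :: "'a \<Rightarrow> 'a \<Rightarrow> bool" and n h :: nat and \<Lambda> :: real
    and v :: 'a and \<phi> :: "'a \<Rightarrow> nat"
  assumes "simple_graph V E" and "card V = n" and "n \<ge> 2"
    and "h \<ge> 3" and "\<Lambda> > 0" and "\<Lambda> \<ge> 1/2"
    and "v \<in> V" and "\<forall>u\<in>V. \<phi> u < h"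
    and "real (t_cycles V E \<phi> h v) \<ge> \<Lambda> * (2 * real h * log 2 (real n)) ^ ((h - 1)^2)"
  shows "\<exists>p \<in> Product h \<Lambda>.
    measure_pmf.prob (keep_pmf V \<phi> p)
      {S. \<exists>C \<in> dir_cycles {u \<in> V. S u} (col_arc E \<phi> h) h. v \<in> fst ` C}
    \<ge> (1 - 1 / exp 1) ^ (h - 1)"
proof -
  note G = assms(1)
  have cardV: "card V = n" and n2: "n \<ge> 2" and h3: "h \<ge> 3" and L0: "\<Lambda> > 0" and Lh: "\<Lambda> \<ge> 1/2"
    and vV: "v \<in> V" and phi: "\<forall>u\<in>V. \<phi> u < h" and tb: "real (t_cycles V E \<phi> h v) \<ge> \<Lambda> * (2 * real h * log 2 (real n)) ^ ((h - 1)^2)"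
    using assms by auto
  let ?A = "col_arc E \<phi> h"
  have finV: "finite V" using G simple_graph_def by blast
  have vh: "\<phi> v < h" using phi vV by blast
  have logn: "1 \<le> log 2 (real n)"
  proof -
    have "log 2 2 \<le> log 2 (real n)" using n2 by (subst log_le_cancel_iff) auto
    then show ?thesis by simp
  qed
  define B' where "B' = 2 * real h * log 2 (real n)"
  define e where "e = (h - 1) ^ 2"
  have B'1: "1 \<le> B'"
  proof -
    have "1 \<le> 2 * real h" using h3 by simp
    then have "1 * 1 \<le> (2 * real h) * log 2 (real n)" using logn by (intro mult_mono) auto
    then show ?thesis unfolding B'_def by simp
  qed
  have B'e: "0 < B' ^ e" using B'1 by simp
  define t where "t = t_cycles V E \<phi> h v"
  have tb': "\<Lambda> * B' ^ e \<le> real t" using tb unfolding t_def B'_def e_def by simp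
  have tpos: "0 < t"
  proof -
    have "0 < \<Lambda> * B' ^ e" using L0 B'e by simp
    then show ?thesis using tb' by simp
  qed
  have tc: "t \<le> cnt V ?A v (h - 1) v" unfolding t_def using tcyc_le[OF G] h3 by simp
  have cpos: "0 < cnt V ?A v (h - 1) v" using tpos tc by simp
  define K where "K = nat \<lfloor>log 2 (real n)\<rfloor>"
  have Kb: "\<forall>j. 2 ^ j \<le> card V \<longrightarrow> j \<le> K"
  proof (intro allI impI)
    fix j :: nat assume "2 ^ j \<le> card V"
    then have "real j \<le> log 2 (real n)" using le_log2_of_power cardV by blast
    then have "int j \<le> \<lfloor>log 2 (real n)\<rfloor>" by (simp add: le_floor_iff)
    then show "j \<le> K" unfolding K_def by simp
  qed
  obtain js where js1: "length js = h - 1" and js3: "good ?A v js v"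
    and js4: "real (cnt V ?A v (h - 1) v) \<le> (2 * real (K + 1)) ^ ((h - 1) ^ 2) * 2 ^ sum_list js"
    using comb[OF finV Kb, rule_format, OF cpos] by blast
  have KB: "2 * real (K + 1) \<le> B'"
  proof -
    have "real K \<le> log 2 (real n)" unfolding K_def using logn by linarith
    then have "2 * real (K + 1) \<le> 4 * log 2 (real n)" using logn by simp
    also have "\<dots> \<le> 2 * real h * log 2 (real n)" using h3 logn by (intro mult_right_mono) auto
    finally show ?thesis unfolding B'_def .
  qed
  have "\<Lambda> * B' ^ e \<le> B' ^ e * 2 ^ sum_list js"
  proof -
    have "\<Lambda> * B' ^ e \<le> real (cnt V ?A v (h - 1) v)" using tb' tc by (meson of_nat_le_iff order_trans)
    also have "\<dots> \<le> (2 * real (K + 1)) ^ e * 2 ^ sum_list js" using js4 unfolding e_def .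
    also have "\<dots> \<le> B' ^ e * 2 ^ sum_list js" using KB by (intro mult_right_mono power_mono) auto
    finally show ?thesis .
  qed
  then have L2: "\<Lambda> \<le> 2 ^ sum_list js" using B'e by (simp add: mult.commute)
  define J where "J = nat \<lceil>log 2 \<Lambda>\<rceil>"
  have logL: "log 2 \<Lambda> \<le> real (sum_list js)"
  proof -
    have "log 2 \<Lambda> \<le> log 2 (2 ^ sum_list js)" using L2 L0 by (subst log_le_cancel_iff) auto
    then show ?thesis by (simp add: log_nat_power)
  qed
  have JS: "J \<le> sum_list js" unfolding J_def using logL by (simp add: ceiling_le_iff nat_le_iff)
  obtain js' where js'1: "length js' = length js" and js'2: "\<forall>i<length js. js' ! i \<le> js ! i"
    and js'3: "sum_list js' = J"
    using reduce_list[OF JS] by blast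
  have gd: "good ?A v js' v" using good_mono[OF js3 js'1 js'2] .
  have len': "length js' = h - 1" using js'1 js1 by simp
  have elJ: "js' ! i \<le> J" if "i < h - 1" for i
    using member_le_sum_list[of "js' ! i" js'] that len' js'3 by simp
  have JL: "real J \<le> log 2 \<Lambda> + 1"
  proof (cases "\<lceil>log 2 \<Lambda>\<rceil> \<le> 0")
    case True
    then have "J = 0" unfolding J_def by simp
    moreover have "-1 \<le> log 2 \<Lambda>"
    proof -
      have "log 2 (1/2) \<le> log 2 \<Lambda>" using Lh by (subst log_le_cancel_iff) auto
      then show ?thesis by (simp add: log_divide)
    qed
    ultimately show ?thesis by simp
  next
    case False
    then have "real J = of_int \<lceil>log 2 \<Lambda>\<rceil>" unfolding J_def by simp
    then show ?thesis using of_int_ceiling_le_add_one by simp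
  qed
  have LJ: "\<Lambda> \<le> 2 ^ J"
  proof -
    have "log 2 \<Lambda> \<le> real J" unfolding J_def by linarith
    then have "2 powr (log 2 \<Lambda>) \<le> 2 powr (real J)" by simp
    then show ?thesis using L0 by (simp add: powr_realpow)
  qed
  define d where "d = (\<lambda>i. (i + (h - \<phi> v)) mod h)"
  define jj where "jj = (\<lambda>i. if i = \<phi> v then 0 else js' ! (d i - 1))"
  define p where "p = (\<lambda>i. (1/2::real) ^ jj i)"
  have dinj: "d i \<noteq> d i'" if "i < h" "i' < h" "i \<noteq> i'" for i i'
  proof (cases "i < i'")
    case True
    then have "((h - \<phi> v) + i) mod h \<noteq> ((h - \<phi> v) + i') mod h" using that by (intro mod_neq) auto
    then show ?thesis unfolding d_def by (simp add: add.commute)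
  next
    case False
    then have "((h - \<phi> v) + i') mod h \<noteq> ((h - \<phi> v) + i) mod h" using that by (intro mod_neq) auto
    then show ?thesis unfolding d_def by (simp add: add.commute)
  qed
  have dv: "d (\<phi> v) = 0" unfolding d_def using vh by simp
  have dlt: "d i < h" for i unfolding d_def using h3 by simp
  have dpos: "0 < d i" if "i < h" "i \<noteq> \<phi> v" for i using dinj[OF that(1) vh that(2)] dv by simp
  have jjJ: "jj i \<le> J" if "i < h" for i
  proof (cases "i = \<phi> v")
    case True then show ?thesis unfolding jj_def by simp
  next
    case False
    then have "d i - 1 < h - 1" using dlt[of i] dpos[OF that False] by linarith
    then show ?thesis unfolding jj_def using False elJ by simp
  qed
  have bij: "bij_betw d {..<h} {..<h}"
  proof -
    have inj: "inj_on d {..<h}" using dinj by (meson inj_onI lessThan_iff)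
    have "d ` {..<h} \<subseteq> {..<h}" using dlt by auto
    then have "d ` {..<h} = {..<h}" using inj by (intro endo_inj_surj) auto
    then show ?thesis using inj by (simp add: bij_betw_def)
  qed
  define g where "g = (\<lambda>k. if k = 0 then 0 else js' ! (k - 1))"
  have jjg: "jj i = g (d i)" if "i < h" for i
    unfolding jj_def g_def using dv dpos[OF that] by auto
  have sumjj: "(\<Sum>i<h. jj i) = J"
  proof -
    have "(\<Sum>i<h. jj i) = (\<Sum>i<h. g (d i))" using jjg by simp
    also have "\<dots> = (\<Sum>k<h. g k)" by (rule sum.reindex_bij_betw[OF bij])
    also have "\<dots> = (\<Sum>k<Suc (h - 1). g k)" using h3 by simp
    also have "\<dots> = (\<Sum>k<h - 1. js' ! k)" by (subst sum.lessThan_Suc_shift) (simp add: g_def)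
    also have "\<dots> = sum_list js'" using len' by (simp add: sum_list_sum_nth atLeast0LessThan)
    finally show ?thesis using js'3 by simp
  qed
  have pPow: "p i = 2 powr (- real_of_int (int (jj i)))" for i
    unfolding p_def by (simp add: powr_minus powr_realpow power_one_over inverse_eq_divide)
  have prodp: "(\<Prod>i<h. p i) = (1/2) ^ J"
    unfolding p_def using sumjj by (simp add: power_sum[symmetric])
  have inProd: "p \<in> Product h \<Lambda>"
    unfolding Product_def
  proof (intro CollectI conjI allI impI)
    fix i assume i: "i < h"
    show "\<exists>j::int. 0 \<le> j \<and> real_of_int j \<le> log 2 \<Lambda> + 1 \<and> p i = 2 powr (- real_of_int j)"
      using jjJ[OF i] JL pPow by (intro exI[of _ "int (jj i)"]) auto
  next
    have "(1/2::real) ^ J = 1 / 2 ^ J" by (simp add: power_one_over)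
    also have "\<dots> \<le> 1 / \<Lambda>" using LJ L0 by (intro divide_left_mono) auto
    finally show "(\<Prod>i<h. p i) \<le> 1 / \<Lambda>" using prodp by simp
  qed
  have pcond: "\<forall>i<length js'. 0 \<le> p ((\<phi> v + 0 + 1 + i) mod h) \<and> p ((\<phi> v + 0 + 1 + i) mod h) \<le> 1
        \<and> 1 \<le> p ((\<phi> v + 0 + 1 + i) mod h) * 2 ^ (js' ! i)"
  proof (intro allI impI)
    fix i assume i: "i < length js'"
    define cc where "cc = (\<phi> v + 0 + 1 + i) mod h"
    have ne: "cc \<noteq> \<phi> v"
    proof -
      have "(\<phi> v + 0) mod h \<noteq> (\<phi> v + (i + 1)) mod h" using i len' by (intro mod_neq) auto
      then show ?thesis unfolding cc_def using vh by (simp add: add.assoc)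
    qed
    have dcc: "d cc = i + 1"
    proof -
      have "d cc = (\<phi> v + 1 + i + (h - \<phi> v)) mod h" unfolding d_def cc_def by (simp add: mod_add_left_eq)
      also have "\<phi> v + 1 + i + (h - \<phi> v) = (i + 1) + h" using vh by simp
      also have "((i + 1) + h) mod h = i + 1"
      proof -
        have "((i + 1) + h) mod h = (i + 1) mod h" by (rule mod_add_self2)
        also have "\<dots> = i + 1" using i len' by (intro mod_less) simp
        finally show ?thesis .
      qed
      finally show ?thesis .
    qed
    have "jj cc = js' ! i" unfolding jj_def using ne dcc by simp
    then have "p cc = (1/2) ^ (js' ! i)" unfolding p_def by simp
    then show "0 \<le> p ((\<phi> v + 0 + 1 + i) mod h) \<and> p ((\<phi> v + 0 + 1 + i) mod h) \<le> 1
        \<and> 1 \<le> p ((\<phi> v + 0 + 1 + i) mod h) * 2 ^ (js' ! i)"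
      unfolding cc_def[symmetric] by (simp add: power_one_over power_le_one)
  qed
  have Rp: "(1 - 1 / exp 1) ^ (h - 1) \<le> measure_pmf.prob (keep_pmf V \<phi> p) {S. reach ?A v (h - 1) v S}"
    using reach_prob[OF G, where js=js' and p=p and v=v and \<phi>=\<phi> and h=h, rule_format, where x=v and k=0] len' h3 vh gd pcond by simp
  define N where "N = keep_pmf V \<phi> p"
  have pv: "p (\<phi> v) = 1" unfolding p_def jj_def by simp
  have nv: "measure_pmf.prob N {S. \<not> S v} = 0"
  proof -
    have "measure_pmf.prob N {S. \<not> S v} = measure_pmf.prob (map_pmf (\<lambda>S. S v) N) {False}"
      by (simp add: vimage_def)
    also have "map_pmf (\<lambda>S. S v) N = bernoulli_pmf 1"
      unfolding N_def keep_pmf_def using Pi_pmf_component[OF finV, of v False] vV pv by simp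
    finally show ?thesis by (simp add: measure_pmf_single)
  qed
  define Tgt where "Tgt = {S. \<exists>C \<in> dir_cycles {u \<in> V. S u} (col_arc E \<phi> h) h. v \<in> fst ` C}"
  have sub1: "{S. S v \<and> reach ?A v (h - 1) v S} \<subseteq> Tgt"
  proof
    fix S assume "S \<in> {S. S v \<and> reach ?A v (h - 1) v S}"
    then have "S v" "reach ?A v (h - 1) v S" by auto
    moreover have h2: "2 \<le> h" using h3 by simp
    ultimately show "S \<in> Tgt" unfolding Tgt_def using reach_cycle[where \<phi>=\<phi> and v=v, OF G h2 vh vV] by blast
  qed
  have "measure_pmf.prob N {S. reach ?A v (h - 1) v S}
      \<le> measure_pmf.prob N ({S. S v \<and> reach ?A v (h - 1) v S} \<union> {S. \<not> S v})"
    by (intro measure_pmf.finite_measure_mono) auto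
  also have "\<dots> \<le> measure_pmf.prob N {S. S v \<and> reach ?A v (h - 1) v S} + measure_pmf.prob N {S. \<not> S v}"
    by (intro measure_Un_le) auto
  also have "\<dots> \<le> measure_pmf.prob N Tgt"
    using nv measure_pmf.finite_measure_mono[OF sub1] by simp
  finally have "(1 - 1 / exp 1) ^ (h - 1) \<le> measure_pmf.prob N Tgt" using Rp N_def by simp
  then show ?thesis using inProd unfolding N_def Tgt_def by blast
qed

end
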